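(* Let $n$ be even. Take $n$ oriented triangles, each labeled and identified with the standard oriented 2-simplex, and pair their $3n$ sides by a uniformly random perfect matching; glue each pair of sides by the unique identification compatible with the orientations, producing a closed oriented (possibly disconnected) surface $\Sigma$. Then the expected number of vertices of $\Sigma$ is at most $\tfrac{3}{2}\log(n)+6$ (natural logarithm).
   Context: This random gluing produces the uniform distribution on the set of labeled oriented triangulated surfaces built from $n$ triangles (triangulations here are just assemblages of triangles with sides glued in pairs, not necessarily simplicial complexes). The vertices of $\Sigma$ are the equivalence classes of triangle corners after gluing. *)

theory Defs
  imports Complex_Main
begin

text \<open>Triangles are labelled 0..n-1; triangle i is the standard oriented 2-simplex
  with corners (i,0),(i,1),(i,2). Its oriented sides are (i,j) for j<3, side (i,j)
  running from corner (i,j) to corner (i,(j+1) mod 3).\<close>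

definition tri_sides :: "nat \<Rightarrow> (nat \<times> nat) set" where
  "tri_sides n = {0..<n} \<times> {0..<3}"

definition tri_corners :: "nat \<Rightarrow> (nat \<times> nat) set" where
  "tri_corners n = {0..<n} \<times> {0..<3}"

text \<open>Perfect matchings of the 3n sides, as fixed-point-free involutions of the side set
  (extended by the identity outside, so that the set of matchings is finite).\<close>

definition side_matchings :: "nat \<Rightarrow> ((nat \<times> nat) \<Rightarrow> (nat \<times> nat)) set" where
  "side_matchings n = {m. (\<forall>s\<in>tri_sides n. m s \<in> tri_sides n \<and> m s \<noteq> s \<and> m (m s) = s)
                         \<and> (\<forall>s. s \<notin> tri_sides n \<longrightarrow> m s = s)}"

text \<open>Orientation-compatible gluing: side (i,j) (corner j \<rightarrow> j+1) is glued to side (k,l)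
  (corner l \<rightarrow> l+1) reversing direction, so corner (i,j) is identified with (k,l+1) and
  corner (i,j+1) with (k,l).\<close>

definition glue_rel :: "nat \<Rightarrow> ((nat \<times> nat) \<Rightarrow> (nat \<times> nat)) \<Rightarrow> ((nat \<times> nat) \<times> (nat \<times> nat)) set" where
  "glue_rel n m =
     {((i, j), (fst (m (i, j)), (snd (m (i, j)) + 1) mod 3)) | i j. (i, j) \<in> tri_sides n}
   \<union> {((i, (j + 1) mod 3), m (i, j)) | i j. (i, j) \<in> tri_sides n}"

definition surface_vertices :: "nat \<Rightarrow> ((nat \<times> nat) \<Rightarrow> (nat \<times> nat)) \<Rightarrow> (nat \<times> nat) set set" where
  "surface_vertices n m = tri_corners n // ((glue_rel n m \<union> (glue_rel n m)\<inverse>)\<^sup>*)"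

definition num_vertices :: "nat \<Rightarrow> ((nat \<times> nat) \<Rightarrow> (nat \<times> nat)) \<Rightarrow> nat" where
  "num_vertices n m = card (surface_vertices n m)"

definition expected_vertices :: "nat \<Rightarrow> real" where
  "expected_vertices n =
     (\<Sum>m\<in>side_matchings n. real (num_vertices n m)) / real (card (side_matchings n))"

end

theory Submission
  imports Defs
begin


definition skip :: "'a \<Rightarrow> ('a \<Rightarrow> 'a) \<Rightarrow> 'a \<Rightarrow> 'a" where
  "skip s f x = (if f x = s then f s else f x)"

definition Ed :: "'a set \<Rightarrow> ('a \<Rightarrow> 'a) \<Rightarrow> ('a \<times> 'a) set" where
  "Ed S f = {(x, f x) | x. x \<in> S}"

definition Rl :: "'a set \<Rightarrow> ('a \<Rightarrow> 'a) \<Rightarrow> ('a \<times> 'a) set" where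
  "Rl S f = (Ed S f \<union> (Ed S f)\<inverse>)\<^sup>*"

definition cyc :: "'a set \<Rightarrow> ('a \<Rightarrow> 'a) \<Rightarrow> nat" where
  "cyc S f = card (S // Rl S f)"

lemma cyc_cong: "(\<And>x. x \<in> S \<Longrightarrow> f x = g x) \<Longrightarrow> cyc S f = cyc S g"
proof -
  assume "\<And>x. x \<in> S \<Longrightarrow> f x = g x"
  hence "Ed S f = Ed S g" unfolding Ed_def by auto
  thus ?thesis unfolding cyc_def Rl_def by simp
qed

lemma Rl_equiv: "equiv UNIV (Rl S f)"
  unfolding Rl_def equiv_def
  by (auto simp: refl_rtrancl trans_rtrancl sym_rtrancl sym_Un_converse)

lemma Rl_sym: "(x, y) \<in> Rl S f \<Longrightarrow> (y, x) \<in> Rl S f"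
  using Rl_equiv[of S f] unfolding equiv_def sym_def by blast

lemma Rl_trans: "(x, y) \<in> Rl S f \<Longrightarrow> (y, z) \<in> Rl S f \<Longrightarrow> (x, z) \<in> Rl S f"
  using Rl_equiv[of S f] unfolding equiv_def trans_def by blast

lemma Rl_edge: "x \<in> S \<Longrightarrow> (x, f x) \<in> Rl S f"
  unfolding Rl_def Ed_def by auto

lemma Rl_in: 
  assumes "\<And>x. x \<in> S \<Longrightarrow> f x \<in> S" "(x, y) \<in> Rl S f"
  shows "x = y \<or> (x \<in> S \<and> y \<in> S)"
  using assms(2) unfolding Rl_def
proof (induction rule: rtrancl_induct)
  case base then show ?case by simp
next
  case (step y z) then show ?case using assms(1) unfolding Ed_def by auto
qed

lemma rtrancl_map:
  assumes one: "\<And>y z. (y, z) \<in> E \<Longrightarrow> (h y, h z) \<in> Q" and eq: "equiv UNIV Q"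
    and xy: "(x, y) \<in> (E \<union> E\<inverse>)\<^sup>*"
  shows "(h x, h y) \<in> Q"
  using xy
proof (induction rule: rtrancl_induct)
  case base
  then show ?case using eq unfolding equiv_def refl_on_def by blast
next
  case (step y z)
  have "(h y, h z) \<in> Q"
  proof (cases "(y, z) \<in> E")
    case True thus ?thesis by (rule one)
  next
    case False
    hence "(z, y) \<in> E" using step.hyps(2) by auto
    hence "(h z, h y) \<in> Q" by (rule one)
    thus ?thesis using eq unfolding equiv_def sym_def by blast
  qed
  with step.IH show ?case using eq unfolding equiv_def trans_def by blast
qed

lemma quotient_img: "A // r = (\<lambda>x. r``{x}) ` A"
  unfolding quotient_def by auto

lemma skip_bij:
  assumes "finite S" "bij_betw f S S" "s \<in> S"
  shows "bij_betw (skip s f) (S - {s}) (S - {s})"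
proof -
  have inj: "inj_on f S" and img: "f ` S = S" using assms(2) by (auto simp: bij_betw_def)
  have sub: "skip s f ` (S - {s}) \<subseteq> S - {s}"
  proof
    fix y assume "y \<in> skip s f ` (S - {s})"
    then obtain x where x: "x \<in> S" "x \<noteq> s" "y = skip s f x" by auto
    show "y \<in> S - {s}"
    proof (cases "f x = s")
      case True
      hence "f s \<noteq> s" using inj x assms(3) by (metis inj_onD)
      thus ?thesis using True x img assms(3) by (auto simp: skip_def)
    next
      case False thus ?thesis using x img by (auto simp: skip_def)
    qed
  qed
  have "inj_on (skip s f) (S - {s})"
  proof (rule inj_onI)
    fix x y assume xy: "x \<in> S - {s}" "y \<in> S - {s}" "skip s f x = skip s f y"
    show "x = y"
    proof (cases "f x = s")
      case True
      show ?thesis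
      proof (cases "f y = s")
        case True thus ?thesis using \<open>f x = s\<close> xy inj by (metis DiffD1 inj_onD)
      next
        case False thus ?thesis using \<open>f x = s\<close> xy inj assms(3) unfolding skip_def
          by (metis DiffD1 DiffD2 inj_onD singletonI)
      qed
    next
      case False
      show ?thesis
      proof (cases "f y = s")
        case True thus ?thesis using \<open>f x \<noteq> s\<close> xy inj assms(3) unfolding skip_def
          by (metis DiffD1 DiffD2 inj_onD singletonI)
      next
        case False thus ?thesis using \<open>f x \<noteq> s\<close> xy inj unfolding skip_def
          by (metis DiffD1 inj_onD)
      qed
    qed
  qed
  thus ?thesis using endo_inj_surj[OF _ sub] assms(1) by (auto simp: bij_betw_def)
qed

lemma skip_cyc:
  assumes fin: "finite S" and bij: "bij_betw f S S" and sS: "s \<in> S"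
  shows "cyc S f = cyc (S - {s}) (skip s f) + (if f s = s then 1 else 0)"
proof -
  have inj: "inj_on f S" and img: "f ` S = S" using bij by (auto simp: bij_betw_def)
  have fS: "\<And>x. x \<in> S \<Longrightarrow> f x \<in> S" using img by auto
  let ?S' = "S - {s}" and ?g = "skip s f"
  let ?R = "Rl S f" and ?R' = "Rl ?S' ?g"
  have gS: "\<And>x. x \<in> ?S' \<Longrightarrow> ?g x \<in> ?S'" using skip_bij[OF fin bij sS] 
    by (auto simp: bij_betw_def)
  have R'R: "(x, y) \<in> ?R'  \<Longrightarrow> (x, y) \<in> ?R" for x y
  proof -
    have "Ed ?S' ?g \<subseteq> ?R"
    proof
      fix p assume "p \<in> Ed ?S' ?g"
      then obtain x where x: "x \<in> ?S'" "p = (x, ?g x)" unfolding Ed_def by auto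
      show "p \<in> ?R"
      proof (cases "f x = s")
        case True
        have "(x, f x) \<in> ?R" using x by (intro Rl_edge) simp
        hence "(x, s) \<in> ?R" using True by simp
        moreover have "(s, f s) \<in> ?R" using Rl_edge[of s S f] sS by auto
        ultimately have "(x, f s) \<in> ?R" by (rule Rl_trans)
        thus ?thesis using x True by (simp add: skip_def)
      next
        case False
        have "(x, f x) \<in> ?R" using x by (intro Rl_edge) simp
        thus ?thesis using x False by (simp add: skip_def)
      qed
    qed
    moreover have "(Ed ?S' ?g)\<inverse> \<subseteq> ?R"
    proof
      fix p assume "p \<in> (Ed ?S' ?g)\<inverse>"
      then obtain a b where ab: "p = (a, b)" "(b, a) \<in> Ed ?S' ?g" by auto
      hence "(b, a) \<in> ?R" using \<open>Ed ?S' ?g \<subseteq> ?R\<close> by blast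
      thus "p \<in> ?R" using ab Rl_sym[of b a S f] by simp
    qed
    ultimately have "Ed ?S' ?g \<union> (Ed ?S' ?g)\<inverse> \<subseteq> ?R" by (rule Un_least)
    hence "(Ed ?S' ?g \<union> (Ed ?S' ?g)\<inverse>)\<^sup>* \<subseteq> ?R\<^sup>*" by (rule rtrancl_mono)
    also have "?R\<^sup>* = ?R" unfolding Rl_def by simp
    finally show "(x, y) \<in> ?R' \<Longrightarrow> (x, y) \<in> ?R" unfolding Rl_def[of ?S'] by blast
  qed
  show ?thesis
  proof (cases "f s = s")
    case False
    define h where "h x = (if x = s then f s else x)" for x
    have hS: "x \<in> S \<Longrightarrow> h x \<in> ?S'" for x using False fS sS by (auto simp: h_def)
    have one: "(h y, h z) \<in> ?R'" if "(y, z) \<in> Ed S f" for y z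
    proof -
      from that have y: "y \<in> S" "z = f y" unfolding Ed_def by auto
      show ?thesis
      proof (cases "y = s")
        case True thus ?thesis using y False by (auto simp: h_def Rl_def)
      next
        case ys: False
        have "(y, ?g y) \<in> ?R'" using Rl_edge[of y ?S' ?g] y ys by auto
        thus ?thesis using y ys False by (auto simp: h_def skip_def split: if_splits)
      qed
    qed
    have hR: "(h x, h y) \<in> ?R'" if "(x, y) \<in> ?R" for x y
      using one Rl_equiv that unfolding Rl_def[of S] by (rule rtrancl_map)
    have hx: "(x, h x) \<in> ?R" if "x \<in> S" for x
      using Rl_edge[of s S f] sS by (auto simp: h_def Rl_def)
    have cls: "?R'``{h x} = ?R``{x} - {s}" if "x \<in> S" for x
    proof
      show "?R'``{h x} \<subseteq> ?R``{x} - {s}"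
      proof
        fix y assume "y \<in> ?R'``{h x}"
        hence y: "(h x, y) \<in> ?R'" by auto
        hence "y \<in> ?S'" using Rl_in[of ?S' ?g, OF gS y] hS[OF that] by auto
        moreover have "(x, y) \<in> ?R" using hx[OF that] R'R[OF y] by (rule Rl_trans)
        ultimately show "y \<in> ?R``{x} - {s}" by auto
      qed
    next
      show "?R``{x} - {s} \<subseteq> ?R'``{h x}"
      proof
        fix y assume "y \<in> ?R``{x} - {s}"
        hence y: "(x, y) \<in> ?R" "y \<noteq> s" by auto
        have "(h x, h y) \<in> ?R'" using hR[OF y(1)] .
        moreover have "h y = y" using y(2) by (simp add: h_def)
        ultimately show "y \<in> ?R'``{h x}" by auto
      qed
    qed
    have q: "?S' // ?R' = (\<lambda>C. C - {s}) ` (S // ?R)"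
    proof -
      have "?S' // ?R' = (\<lambda>x. ?R'``{h x}) ` S"
      proof -
        have "h ` S = ?S'"
        proof
          show "h ` S \<subseteq> ?S'" using hS by blast
          show "?S' \<subseteq> h ` S"
          proof
            fix y assume "y \<in> ?S'"
            hence "h y = y" "y \<in> S" by (auto simp: h_def)
            thus "y \<in> h ` S" by (metis imageI)
          qed
        qed
        hence "(\<lambda>x. ?R'``{x}) ` ?S' = (\<lambda>x. ?R'``{x}) ` (h ` S)" by simp
        also have "\<dots> = (\<lambda>x. ?R'``{h x}) ` S" by (rule image_image)
        finally show ?thesis unfolding quotient_img .
      qed
      also have "\<dots> = (\<lambda>x. ?R``{x} - {s}) ` S" by (rule image_cong[OF refl cls])
      also have "\<dots> = (\<lambda>C. C - {s}) ` (S // ?R)" unfolding quotient_img by (simp add: image_image)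
      finally show ?thesis .
    qed
    have "inj_on (\<lambda>C. C - {s}) (S // ?R)"
    proof (rule inj_onI)
      fix C D assume "C \<in> S // ?R" "D \<in> S // ?R" and eq: "C - {s} = D - {s}"
      then obtain x y where xy: "x \<in> S" "y \<in> S" "C = ?R``{x}" "D = ?R``{y}"
        unfolding quotient_img by auto
      have "h x \<in> ?R'``{h x}" by (simp add: Rl_def)
      hence "h x \<in> D" using cls[OF xy(1)] eq xy by auto
      hence "(y, h x) \<in> ?R" using xy by auto
      hence "(h x, y) \<in> ?R" by (rule Rl_sym)
      with hx[OF xy(1)] have "(x, y) \<in> ?R" by (rule Rl_trans)
      thus "C = D" using xy Rl_equiv[of S f] by (simp add: equiv_class_eq_iff)
    qed
    hence "card (?S' // ?R') = card (S // ?R)" using q card_image by metis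
    thus ?thesis using False by (simp add: cyc_def)
  next
    case True
    have gf: "?g x = f x" if "x \<in> ?S'" for x
    proof -
      have "f x \<noteq> s" using that True inj sS by (metis DiffE inj_onD singletonI)
      thus ?thesis by (simp add: skip_def)
    qed
    have fS': "f x \<in> ?S'" if "x \<in> ?S'" for x using gS gf that by metis
    have E: "Ed S f = insert (s, s) (Ed ?S' ?g)"
      using True sS unfolding Ed_def skip_def by auto
    have EE: "Ed S f \<union> (Ed S f)\<inverse> = insert (s,s) (Ed ?S' ?g \<union> (Ed ?S' ?g)\<inverse>)"
      unfolding E by auto
    have "?R = ((insert (s,s) (Ed ?S' ?g \<union> (Ed ?S' ?g)\<inverse>)) - Id)\<^sup>*"
      unfolding Rl_def rtrancl_r_diff_Id EE ..
    also have "\<dots> = ((Ed ?S' ?g \<union> (Ed ?S' ?g)\<inverse>) - Id)\<^sup>*" by (simp add: insert_Diff_if)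
    finally have RR: "?R = ?R'" unfolding Rl_def rtrancl_r_diff_Id by simp
    have cs: "?R``{s} = {s}"
    proof -
      have "(s, y) \<in> ?R' \<Longrightarrow> y = s" for y using Rl_in[of ?S' ?g, OF gS] by blast
      thus ?thesis using RR by (auto simp: Rl_def)
    qed
    have "S // ?R = insert {s} (?S' // ?R)"
    proof -
      have "S = insert s ?S'" using sS by auto
      hence "S // ?R = insert (?R``{s}) (?S' // ?R)" unfolding quotient_img by (metis image_insert)
      thus ?thesis using cs by simp
    qed
    moreover have "{s} \<notin> ?S' // ?R"
    proof
      assume "{s} \<in> ?S' // ?R"
      then obtain x where "x \<in> ?S'" "{s} = ?R``{x}" unfolding quotient_img by auto
      moreover have "x \<in> ?R``{x}" by (simp add: Rl_def)
      ultimately show False by auto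
    qed
    moreover have "finite (?S' // ?R)" unfolding quotient_img using fin by auto
    ultimately show ?thesis using True RR by (simp add: cyc_def)
  qed
qed



definition M :: "'a set \<Rightarrow> ('a \<Rightarrow> 'a) set" where
  "M S = {m. (\<forall>s\<in>S. m s \<in> S \<and> m s \<noteq> s \<and> m (m s) = s) \<and> (\<forall>s. s \<notin> S \<longrightarrow> m s = s)}"

lemma M_finite:
  assumes "finite S" shows "finite (M S)"
proof -
  let ?F = "{g :: 'a \<Rightarrow> 'a option. \<forall>x. (x \<in> S \<longrightarrow> g x \<in> Some ` S) \<and> (x \<notin> S \<longrightarrow> g x = None)}"
  let ?enc = "\<lambda>m x. if x \<in> S then Some (m x) else None"
  have "finite ?F" using finite_set_of_finite_funs[OF assms finite_imageI[OF assms], of Some None] .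
  moreover have "?enc ` M S \<subseteq> ?F" unfolding M_def by auto
  moreover have "inj_on ?enc (M S)"
  proof (rule inj_onI)
    fix m m' assume mm: "m \<in> M S" "m' \<in> M S" "?enc m = ?enc m'"
    show "m = m'"
    proof
      fix x show "m x = m' x"
      proof (cases "x \<in> S")
        case True thus ?thesis using fun_cong[OF mm(3), of x] by simp
      next
        case False thus ?thesis using mm(1,2) unfolding M_def by auto
      qed
    qed
  qed
  ultimately show ?thesis by (meson finite_imageD finite_subset)
qed

lemma M_D: "m \<in> M S \<Longrightarrow> x \<in> S \<Longrightarrow> m x \<in> S \<and> m x \<noteq> x \<and> m (m x) = x"
  unfolding M_def by auto

lemma M_out: "m \<in> M S \<Longrightarrow> x \<notin> S \<Longrightarrow> m x = x"
  unfolding M_def by auto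

lemma M_bij: assumes "m \<in> M S" shows "bij_betw m S S"
proof -
  have "inj_on m S" by (metis M_D assms inj_onI)
  moreover have "m ` S = S"
  proof
    show "m ` S \<subseteq> S" using M_D[OF assms] by auto
    show "S \<subseteq> m ` S"
    proof
      fix x assume "x \<in> S"
      hence "x = m (m x)" "m x \<in> S" using M_D[OF assms] by auto
      thus "x \<in> m ` S" by (metis imageI)
    qed
  qed
  ultimately show ?thesis by (simp add: bij_betw_def)
qed

lemma M_split_bij:
  assumes sS: "s \<in> S" and tS: "t \<in> S" and st: "s \<noteq> t"
  shows "bij_betw (\<lambda>m. m(s := s, t := t)) {m \<in> M S. m s = t} (M (S - {s, t}))"
proof (rule bij_betw_byWitness[where f' = "\<lambda>m. m(s := t, t := s)"])
  show "\<forall>a\<in>{m \<in> M S. m s = t}. a(s := s, t := t, s := t, t := s) = a"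
  proof
    fix a assume a: "a \<in> {m \<in> M S. m s = t}"
    hence "a t = s" using M_D[of a S s] sS by auto
    thus "a(s := s, t := t, s := t, t := s) = a" using a by auto
  qed
  show "\<forall>a'\<in>M (S - {s, t}). a'(s := t, t := s, s := s, t := t) = a'"
  proof
    fix a assume a: "a \<in> M (S - {s, t})"
    hence "a s = s" "a t = t" using M_out[OF a] by auto
    thus "a(s := t, t := s, s := s, t := t) = a" by auto
  qed
  show "(\<lambda>m. m(s := s, t := t)) ` {m \<in> M S. m s = t} \<subseteq> M (S - {s, t})"
  proof
    fix m' assume "m' \<in> (\<lambda>m. m(s := s, t := t)) ` {m \<in> M S. m s = t}"
    then obtain m where m: "m \<in> M S" "m s = t" "m' = m(s := s, t := t)" by auto
    have mt: "m t = s" using M_D[OF m(1) sS] m(2) by auto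
    have A: "m' x \<in> S - {s, t} \<and> m' x \<noteq> x \<and> m' (m' x) = x" if x: "x \<in> S - {s, t}" for x
    proof -
      have "m x \<in> S" "m x \<noteq> x" "m (m x) = x" using M_D[OF m(1)] x by auto
      moreover have "m x \<noteq> s"
      proof
        assume "m x = s" hence "x = t" using m(2) \<open>m (m x) = x\<close> by simp
        thus False using x by simp
      qed
      moreover have "m x \<noteq> t"
      proof
        assume "m x = t" hence "x = s" using mt \<open>m (m x) = x\<close> by simp
        thus False using x by simp
      qed
      ultimately show ?thesis using x m(3) by auto
    qed
    have B: "m' x = x" if "x \<notin> S - {s, t}" for x
      using that m(3) M_out[OF m(1)] by auto
    show "m' \<in> M (S - {s, t})" unfolding M_def using A B by blast
  qed
  show "(\<lambda>m. m(s := t, t := s)) ` M (S - {s, t}) \<subseteq> {m \<in> M S. m s = t}"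
  proof
    fix m assume "m \<in> (\<lambda>m. m(s := t, t := s)) ` M (S - {s, t})"
    then obtain m' where m': "m' \<in> M (S - {s, t})" "m = m'(s := t, t := s)" by auto
    have A: "m x \<in> S \<and> m x \<noteq> x \<and> m (m x) = x" if x: "x \<in> S" for x
    proof (cases "x = s \<or> x = t")
      case True thus ?thesis using m'(2) st sS tS by auto
    next
      case False
      hence "m' x \<in> S - {s, t}" "m' x \<noteq> x" "m' (m' x) = x" using M_D[OF m'(1)] x by auto
      thus ?thesis using m'(2) False by auto
    qed
    have B: "m x = x" if "x \<notin> S" for x
      using that m'(2) M_out[OF m'(1)] sS tS by auto
    have "m \<in> M S" unfolding M_def using A B by blast
    moreover have "m s = t" using m'(2) st by simp
    ultimately show "m \<in> {m \<in> M S. m s = t}" by simp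
  qed
qed

fun df :: "nat \<Rightarrow> nat" where
  "df 0 = 1" | "df (Suc n) = (2 * n + 1) * df n"

lemma M_sum_split:
  assumes fin: "finite S" and sS: "s \<in> S"
  shows "(\<Sum>m\<in>M S. F m) = (\<Sum>t\<in>S - {s}. \<Sum>m\<in>{m \<in> M S. m s = t}. F m)"
proof -
  have "(\<lambda>m. m s) ` M S \<subseteq> S - {s}" using M_D sS by fastforce
  thus ?thesis using sum.group[OF M_finite[OF fin] finite_Diff[OF fin], where g="\<lambda>m. m s" and h=F] by simp
qed

lemma card_M:
  assumes "finite S" "card S = 2 * N" shows "card (M S) = df N"
  using assms
proof (induction N arbitrary: S)
  case 0
  hence "S = {}" by simp
  hence "M S = {id}" unfolding M_def by auto
  thus ?case by simp
next
  case (Suc N)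
  then obtain s where sS: "s \<in> S" by fastforce
  have "card (M S) = (\<Sum>m\<in>M S. 1)" by simp
  also have "\<dots> = (\<Sum>t\<in>S - {s}. \<Sum>m\<in>{m \<in> M S. m s = t}. 1)"
    by (rule M_sum_split[OF Suc.prems(1) sS])
  also have "\<dots> = (\<Sum>t\<in>S - {s}. df N)"
  proof (rule sum.cong[OF refl])
    fix t assume t: "t \<in> S - {s}"
    have "card {m \<in> M S. m s = t} = card (M (S - {s, t}))"
      using M_split_bij[OF sS, of t] t by (auto intro: bij_betw_same_card)
    also have "\<dots> = df N"
    proof (rule Suc.IH)
      show "finite (S - {s, t})" using Suc.prems by simp
      have "card {s, t} = 2" using t by auto
      moreover have "{s, t} \<subseteq> S" using t sS by auto
      ultimately have "card (S - {s, t}) = card S - 2" using Suc.prems(1)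
        by (simp add: card_Diff_subset)
      thus "card (S - {s, t}) = 2 * N" using Suc.prems(2) by simp
    qed
    finally show "(\<Sum>m\<in>{m \<in> M S. m s = t}. 1) = df N" by simp
  qed
  also have "\<dots> = (2 * N + 1) * df N" using Suc.prems sS by (simp add: card_Diff_singleton)
  finally show ?case by simp
qed



definition tau :: "('a \<Rightarrow> 'a) \<Rightarrow> 'a \<Rightarrow> 'a \<Rightarrow> 'a \<Rightarrow> 'a" where
  "tau \<rho> s t x = (if x = s then \<rho> t else if x = t then \<rho> s else \<rho> x)"

definition rt :: "('a \<Rightarrow> 'a) \<Rightarrow> 'a \<Rightarrow> 'a \<Rightarrow> 'a \<Rightarrow> 'a" where
  "rt \<rho> s t = skip t (skip s (tau \<rho> s t))"

definition cc :: "('a \<Rightarrow> 'a) \<Rightarrow> 'a \<Rightarrow> 'a \<Rightarrow> nat" where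
  "cc \<rho> s t = (if \<rho> t = s then 1 else 0) + (if (if \<rho> s = s then \<rho> t else \<rho> s) = t then 1 else 0)"

lemma tau_bij:
  assumes "bij_betw \<rho> S S" "s \<in> S" "t \<in> S"
  shows "bij_betw (tau \<rho> s t) S S"
proof -
  define sw where "sw x = (if x = s then t else if x = t then s else x)" for x
  have "bij_betw sw S S"
    by (rule bij_betw_byWitness[where f'=sw]) (use assms(2,3) in \<open>auto simp: sw_def\<close>)
  hence "bij_betw (\<rho> \<circ> sw) S S" using assms(1) by (rule bij_betw_trans)
  moreover have "\<rho> \<circ> sw = tau \<rho> s t" by (auto simp: sw_def tau_def)
  ultimately show ?thesis by simp
qed

lemma rt_bij:
  assumes "finite S" "bij_betw \<rho> S S" "s \<in> S" "t \<in> S" "s \<noteq> t"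
  shows "bij_betw (rt \<rho> s t) (S - {s, t}) (S - {s, t})"
proof -
  have "bij_betw (skip s (tau \<rho> s t)) (S - {s}) (S - {s})"
    using skip_bij[OF assms(1) tau_bij[OF assms(2-4)] assms(3)] .
  hence "bij_betw (skip t (skip s (tau \<rho> s t))) (S - {s} - {t}) (S - {s} - {t})"
    using skip_bij[of "S - {s}" _ t] assms by auto
  moreover have "S - {s} - {t} = S - {s, t}" by auto
  ultimately show ?thesis unfolding rt_def by simp
qed

lemma step_cyc:
  assumes fin: "finite S" and bij: "bij_betw \<rho> S S" and m: "m \<in> M S" and sS: "s \<in> S"
    and t: "t = m s"
  shows "cyc S (\<rho> \<circ> m) = cyc (S - {s, t}) (rt \<rho> s t \<circ> m) + cc \<rho> s t"
proof -
  have tS: "t \<in> S" and st: "s \<noteq> t" and mt: "m t = s" using M_D[OF m sS] t by auto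
  have ms: "m s = t" using t by simp
  let ?\<sigma> = "\<rho> \<circ> m"
  have bs: "bij_betw ?\<sigma> S S" using M_bij[OF m] bij by (rule bij_betw_trans)
  have c1: "cyc S ?\<sigma> = cyc (S - {s}) (skip s ?\<sigma>) + (if ?\<sigma> s = s then 1 else 0)"
    by (rule skip_cyc[OF fin bs sS])
  define m2 where "m2 = m(s := s, t := t)"
  define g where "g = skip s (tau \<rho> s t)"
  have m2x: "m2 x = m x" if "x \<noteq> s" "x \<noteq> t" for x using that by (simp add: m2_def)
  have eq1: "skip s ?\<sigma> x = (g \<circ> m2) x" if x: "x \<in> S - {s}" for x
  proof (cases "x = t")
    case True thus ?thesis using mt st by (simp add: g_def skip_def tau_def m2_def ms)
  next
    case False
    have mx: "m x \<in> S" "m (m x) = x" using M_D[OF m] x by auto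
    have "m x \<noteq> s"
    proof
      assume "m x = s" hence "x = t" using mx(2) t by simp
      thus False using False by simp
    qed
    moreover have "m x \<noteq> t"
    proof
      assume "m x = t" hence "x = s" using mx(2) mt by simp
      thus False using x by simp
    qed
    ultimately have "m x \<noteq> s" "m x \<noteq> t" by simp_all
    thus ?thesis using mx(1) False x mt st by (simp add: g_def skip_def tau_def m2_def ms)
  qed
  have c2: "cyc (S - {s}) (skip s ?\<sigma>) = cyc (S - {s}) (g \<circ> m2)"
    by (rule cyc_cong) (rule eq1)
  have bg: "bij_betw (g \<circ> m2) (S - {s}) (S - {s})"
  proof -
    have "bij_betw (g \<circ> m2) (S - {s}) (S - {s}) = bij_betw (skip s ?\<sigma>) (S - {s}) (S - {s})"
      by (rule bij_betw_cong) (rule eq1[symmetric])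
    thus ?thesis using skip_bij[OF fin bs sS] by simp
  qed
  have tS': "t \<in> S - {s}" using tS st by auto
  have c3: "cyc (S - {s}) (g \<circ> m2) = cyc (S - {s} - {t}) (skip t (g \<circ> m2)) + (if (g \<circ> m2) t = t then 1 else 0)"
    by (rule skip_cyc[OF _ bg tS']) (use fin in simp)
  have eq2: "skip t (g \<circ> m2) x = (rt \<rho> s t \<circ> m) x" if x: "x \<in> S - {s} - {t}" for x
  proof -
    have "m2 t = t" by (simp add: m2_def)
    moreover have "m2 x = m x" using x by (intro m2x) auto
    ultimately show ?thesis by (simp add: skip_def rt_def g_def)
  qed
  have c4: "cyc (S - {s} - {t}) (skip t (g \<circ> m2)) = cyc (S - {s, t}) (rt \<rho> s t \<circ> m)"
  proof -
    have "S - {s} - {t} = S - {s, t}" by auto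
    moreover have "cyc (S - {s} - {t}) (skip t (g \<circ> m2)) = cyc (S - {s} - {t}) (rt \<rho> s t \<circ> m)"
      by (rule cyc_cong) (rule eq2)
    ultimately show ?thesis by simp
  qed
  have "(g \<circ> m2) t = (if \<rho> s = s then \<rho> t else \<rho> s)"
    using st by (simp add: g_def skip_def tau_def m2_def)
  moreover have "?\<sigma> s = \<rho> t" using t by simp
  ultimately show ?thesis using c1 c2 c3 c4 by (simp add: cc_def)
qed



definition Fx :: "'a set \<Rightarrow> ('a \<Rightarrow> 'a) \<Rightarrow> nat" where
  "Fx S \<rho> = card {x \<in> S. \<rho> x = x}"

definition H :: "nat \<Rightarrow> real" where
  "H N = (\<Sum>k<N. 1 / (2 * real k + 1))"

lemma fixA:
  assumes rs: "\<rho> s = s" and inj: "\<And>y. y \<in> S \<Longrightarrow> \<rho> y = s \<Longrightarrow> y = s"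
  shows "{x \<in> S - {s, t}. rt \<rho> s t x = x} \<subseteq>
         ({x \<in> S. \<rho> x = x} - {s, t}) \<union> (if \<rho> t \<noteq> t \<and> \<rho> (\<rho> t) = t then {\<rho> t} else {})"
proof
  fix x assume x: "x \<in> {x \<in> S - {s, t}. rt \<rho> s t x = x}"
  hence xS: "x \<in> S" "x \<noteq> s" "x \<noteq> t" and fx: "rt \<rho> s t x = x" by auto
  have rx: "\<rho> x \<noteq> s" using inj xS by blast
  have gx: "skip s (tau \<rho> s t) x = \<rho> x" using xS rx by (simp add: skip_def tau_def)
  have gt: "skip s (tau \<rho> s t) t = \<rho> t" using rs by (simp add: skip_def tau_def)
  show "x \<in> ({x \<in> S. \<rho> x = x} - {s, t}) \<union> (if \<rho> t \<noteq> t \<and> \<rho> (\<rho> t) = t then {\<rho> t} else {})"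
  proof (cases "\<rho> x = t")
    case True
    hence "\<rho> t = x" using fx gx gt by (simp add: rt_def skip_def)
    thus ?thesis using True xS by auto
  next
    case False
    hence "\<rho> x = x" using fx gx by (simp add: rt_def skip_def)
    thus ?thesis using xS by auto
  qed
qed

lemma fixB:
  assumes nf: "\<And>y. y \<in> S \<Longrightarrow> \<rho> y \<noteq> y" and tS: "t \<in> S" and sS: "s \<in> S"
  shows "{x \<in> S - {s, t}. rt \<rho> s t x = x} \<subseteq>
         (if \<rho> (\<rho> t) = s then {\<rho> t} else {}) \<union> (if \<rho> (\<rho> s) = t then {\<rho> s} else {})"
proof
  fix x assume x: "x \<in> {x \<in> S - {s, t}. rt \<rho> s t x = x}"
  hence xS: "x \<in> S" "x \<noteq> s" "x \<noteq> t" and fx: "rt \<rho> s t x = x" by auto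
  have rt': "\<rho> t \<noteq> t" using nf tS by blast
  have rx': "\<rho> x \<noteq> x" using nf xS by blast
  have gx: "skip s (tau \<rho> s t) x = (if \<rho> x = s then \<rho> t else \<rho> x)" using xS by (simp add: skip_def tau_def)
  have gt: "skip s (tau \<rho> s t) t = (if \<rho> s = s then \<rho> t else \<rho> s)" using xS by (simp add: skip_def tau_def)
  show "x \<in> (if \<rho> (\<rho> t) = s then {\<rho> t} else {}) \<union> (if \<rho> (\<rho> s) = t then {\<rho> s} else {})"
  proof (cases "skip s (tau \<rho> s t) x = t")
    case True
    hence e: "skip s (tau \<rho> s t) t = x" using fx by (simp add: rt_def skip_def)
    show ?thesis
    proof (cases "\<rho> s = s")
      case True
      thus ?thesis using nf sS by blast
    next
      case False
      hence "\<rho> s = x" using e gt by simp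
      moreover have "\<rho> x = t"
        using \<open>skip s (tau \<rho> s t) x = t\<close> gx rt' by (auto split: if_splits)
      ultimately show ?thesis by auto
    qed
  next
    case False
    hence e: "skip s (tau \<rho> s t) x = x" using fx by (simp add: rt_def skip_def)
    hence "\<rho> x = s \<and> \<rho> t = x" using gx rx' by (auto split: if_splits)
    thus ?thesis by auto
  qed
qed

lemma card_le1:
  assumes "finite A" "inj_on f A"
  shows "card (A \<inter> {x. f x = y}) \<le> 1"
proof -
  have "\<forall>a1 \<in> A \<inter> {x. f x = y}. \<forall>a2 \<in> A \<inter> {x. f x = y}. a1 = a2"
    using assms(2) by (auto dest: inj_onD)
  thus ?thesis using card_le_Suc0_iff_eq[of "A \<inter> {x. f x = y}"] assms(1) by simp
qed

lemma card_le1': "card (A \<inter> {x. c = x}) \<le> 1"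
proof -
  have "card (A \<inter> {x. c = x}) \<le> card {c}" by (rule card_mono) auto
  thus ?thesis by simp
qed

lemma sum_ind_le1:
  assumes "finite A" "card (A \<inter> {x. P x}) \<le> 1"
  shows "(\<Sum>x\<in>A. (of_bool (P x) :: real)) \<le> 1"
  using assms by simp

lemma card_single_if: "card (if c then {a} else {}) = (if c then 1 else 0)"
  by simp



lemma comb_bound:
  assumes fin: "finite S" and bij: "bij_betw \<rho> S S" and sS: "s \<in> S"
    and ch: "(\<exists>x\<in>S. \<rho> x = x) \<longrightarrow> \<rho> s = s"
  shows "(\<Sum>t\<in>S - {s}. real (Fx (S - {s, t}) (rt \<rho> s t)) / 2 + real (cc \<rho> s t))
         \<le> 3 + real (card (S - {s})) * (real (Fx S \<rho>) / 2)"
proof -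
  have inj: "inj_on \<rho> S" and img: "\<rho> ` S = S" using bij by (auto simp: bij_betw_def)
  have \<rho>S: "\<rho> x \<in> S" if "x \<in> S" for x using img that by auto
  show ?thesis
  proof (cases "\<rho> s = s")
    case True
    let ?F = "{x \<in> S. \<rho> x = x}"
    have finF: "finite ?F" using fin by simp
    have sF: "s \<in> ?F" using sS True by simp
    have each: "real (Fx (S - {s, t}) (rt \<rho> s t)) / 2 + real (cc \<rho> s t) \<le> real (Fx S \<rho>) / 2"
      if t: "t \<in> S - {s}" for t
    proof -
      define B where "B = (if \<rho> t \<noteq> t \<and> \<rho> (\<rho> t) = t then {\<rho> t} else {})"
      have injs: "\<And>y. y \<in> S \<Longrightarrow> \<rho> y = s \<Longrightarrow> y = s"
        using inj sS True by (metis inj_onD)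
      have sub: "{x \<in> S - {s, t}. rt \<rho> s t x = x} \<subseteq> (?F - {s, t}) \<union> B"
        unfolding B_def by (rule fixA[of \<rho> s S t, OF True injs])
      have "Fx (S - {s, t}) (rt \<rho> s t) \<le> card ((?F - {s, t}) \<union> B)"
        unfolding Fx_def by (rule card_mono) (use finF sub in \<open>auto simp: B_def\<close>)
      also have "\<dots> \<le> card (?F - {s, t}) + card B" by (rule card_Un_le)
      finally have f1: "Fx (S - {s, t}) (rt \<rho> s t) \<le> card (?F - {s, t}) + card B" .
      have "?F - {s, t} = ?F - {s} - {t}" by auto
      hence cF: "card (?F - {s, t}) = card ?F - 1 - (if \<rho> t = t then 1 else 0)"
        using finF sF t by (simp add: card_Diff_singleton_if)
      have cF1: "card ?F \<ge> 1" using finF sF by (metis One_nat_def card_0_eq empty_iff not_less_eq_eq le0 le_antisym)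
      have "\<rho> t \<noteq> s" using injs t by auto
      hence ccv: "cc \<rho> s t = (if \<rho> t = t then 1 else 0)" using True by (simp add: cc_def)
      have FxS: "Fx S \<rho> = card ?F" by (simp add: Fx_def)
      show ?thesis
      proof (cases "\<rho> t = t")
        case True
        have "card B = 0" using True by (simp add: B_def)
        moreover have "card ?F \<ge> 2"
        proof -
          have "{s, t} \<subseteq> ?F" using sF t True by auto
          hence "card {s, t} \<le> card ?F" using finF by (rule card_mono[rotated])
          moreover have "card {s, t} = 2" using t by auto
          ultimately show ?thesis by simp
        qed
        ultimately have "Fx (S - {s, t}) (rt \<rho> s t) + 2 \<le> Fx S \<rho>" using f1 cF True FxS by simp
        hence "real (Fx (S - {s, t}) (rt \<rho> s t)) + 2 \<le> real (Fx S \<rho>)" by linarith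
        thus ?thesis using ccv True by simp
      next
        case False
        have "card B \<le> 1" by (simp add: B_def)
        hence "Fx (S - {s, t}) (rt \<rho> s t) \<le> Fx S \<rho>" using f1 cF False FxS cF1 by simp
        hence "real (Fx (S - {s, t}) (rt \<rho> s t)) \<le> real (Fx S \<rho>)" by linarith
        thus ?thesis using ccv False by simp
      qed
    qed
    have "(\<Sum>t\<in>S - {s}. real (Fx (S - {s, t}) (rt \<rho> s t)) / 2 + real (cc \<rho> s t))
          \<le> real (card (S - {s})) * (real (Fx S \<rho>) / 2)"
      by (rule sum_bounded_above) (rule each)
    thus ?thesis by simp
  next
    case False
    have nf: "\<And>y. y \<in> S \<Longrightarrow> \<rho> y \<noteq> y" using ch False by blast
    have "{x \<in> S. \<rho> x = x} = {}" using nf by blast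
    hence Fx0: "Fx S \<rho> = 0" unfolding Fx_def by (metis card.empty)
    let ?T = "S - {s}"
    have finT: "finite ?T" using fin by simp
    have each: "real (Fx (S - {s, t}) (rt \<rho> s t)) / 2 + real (cc \<rho> s t) \<le>
        (of_bool (\<rho> (\<rho> t) = s) + of_bool (\<rho> (\<rho> s) = t)) / 2 + (of_bool (\<rho> t = s) + of_bool (\<rho> s = t))"
      if t: "t \<in> ?T" for t
    proof -
      have sub: "{x \<in> S - {s, t}. rt \<rho> s t x = x} \<subseteq>
         (if \<rho> (\<rho> t) = s then {\<rho> t} else {}) \<union> (if \<rho> (\<rho> s) = t then {\<rho> s} else {})"
        using t by (intro fixB[OF nf _ sS]) auto
      have "Fx (S - {s, t}) (rt \<rho> s t) \<le> card ((if \<rho> (\<rho> t) = s then {\<rho> t} else {}) \<union> (if \<rho> (\<rho> s) = t then {\<rho> s} else {}))"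
        unfolding Fx_def by (rule card_mono) (use sub in auto)
      also have "\<dots> \<le> card (if \<rho> (\<rho> t) = s then {\<rho> t} else {}) + card (if \<rho> (\<rho> s) = t then {\<rho> s} else {})"
        by (rule card_Un_le)
      finally have "real (Fx (S - {s, t}) (rt \<rho> s t)) \<le> of_bool (\<rho> (\<rho> t) = s) + of_bool (\<rho> (\<rho> s) = t)"
        by (simp split: if_splits)
      moreover have "real (cc \<rho> s t) = of_bool (\<rho> t = s) + of_bool (\<rho> s = t)"
        using False by (simp add: cc_def)
      ultimately show ?thesis by simp
    qed
    have s1: "(\<Sum>t\<in>?T. (of_bool (\<rho> (\<rho> t) = s) :: real)) \<le> 1"
    proof (rule sum_ind_le1[OF finT])
      have "inj_on (\<rho> \<circ> \<rho>) ?T"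
      proof (rule comp_inj_on)
        show "inj_on \<rho> ?T" using inj by (rule inj_on_subset) auto
        show "inj_on \<rho> (\<rho> ` ?T)" using inj by (rule inj_on_subset) (use \<rho>S in auto)
      qed
      from card_le1[OF finT this, of s] show "card (?T \<inter> {x. \<rho> (\<rho> x) = s}) \<le> 1" by simp
    qed
    have s2: "(\<Sum>t\<in>?T. (of_bool (\<rho> (\<rho> s) = t) :: real)) \<le> 1"
      by (rule sum_ind_le1[OF finT card_le1'])
    have s3: "(\<Sum>t\<in>?T. (of_bool (\<rho> t = s) :: real)) \<le> 1"
    proof (rule sum_ind_le1[OF finT])
      have "inj_on \<rho> ?T" using inj by (rule inj_on_subset) auto
      from card_le1[OF finT this, of s] show "card (?T \<inter> {x. \<rho> x = s}) \<le> 1" by simp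
    qed
    have s4: "(\<Sum>t\<in>?T. (of_bool (\<rho> s = t) :: real)) \<le> 1"
      by (rule sum_ind_le1[OF finT card_le1'])
    have "(\<Sum>t\<in>?T. real (Fx (S - {s, t}) (rt \<rho> s t)) / 2 + real (cc \<rho> s t))
        \<le> (\<Sum>t\<in>?T. (of_bool (\<rho> (\<rho> t) = s) + of_bool (\<rho> (\<rho> s) = t)) / 2 + (of_bool (\<rho> t = s) + of_bool (\<rho> s = t)))"
      by (rule sum_mono) (rule each)
    also have "\<dots> = ((\<Sum>t\<in>?T. (of_bool (\<rho> (\<rho> t) = s) :: real)) + (\<Sum>t\<in>?T. of_bool (\<rho> (\<rho> s) = t))) / 2
        + ((\<Sum>t\<in>?T. of_bool (\<rho> t = s)) + (\<Sum>t\<in>?T. of_bool (\<rho> s = t)))"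
      by (simp only: sum.distrib flip: sum_divide_distrib)
    also have "\<dots> \<le> 3"
    proof -
      have ar: "(a + b) / 2 + (c + d) \<le> 3"
        if "a \<le> 1" "b \<le> 1" "c \<le> 1" "d \<le> 1" for a b c d :: real
        using that by (simp add: field_simps)
      show ?thesis by (rule ar[OF s1 s2 s3 s4])
    qed
    finally show ?thesis using Fx0 by simp
  qed
qed



lemma H_Suc: "H (Suc N) = H N + 1 / (2 * real N + 1)"
  by (simp add: H_def)

lemma main_bound:
  assumes "finite S" "card S = 2 * N" "bij_betw \<rho> S S"
  shows "(\<Sum>m\<in>M S. real (cyc S (\<rho> \<circ> m))) \<le> real (card (M S)) * (3 * H N + real (Fx S \<rho>) / 2)"
  using assms
proof (induction N arbitrary: S \<rho>)
  case 0
  hence "S = {}" by simp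
  hence "M S = {id}" unfolding M_def by auto
  moreover have "cyc {} f = 0" for f :: "'a \<Rightarrow> 'a" by (simp add: cyc_def quotient_img)
  ultimately show ?case using \<open>S = {}\<close> by (simp add: H_def)
next
  case (Suc N)
  note fin = Suc.prems(1) and cS = Suc.prems(2) and bij = Suc.prems(3)
  have "S \<noteq> {}" using cS by auto
  obtain s where sS: "s \<in> S" and ch: "(\<exists>x\<in>S. \<rho> x = x) \<longrightarrow> \<rho> s = s"
  proof (cases "\<exists>x\<in>S. \<rho> x = x")
    case True then obtain x where "x \<in> S" "\<rho> x = x" by blast
    thus ?thesis using that by blast
  next
    case False then obtain x where "x \<in> S" using \<open>S \<noteq> {}\<close> by blast
    thus ?thesis using that False by blast
  qed
  let ?T = "S - {s}"
  let ?K = "df N"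
  have cT: "card ?T = 2 * N + 1" using cS sS fin by (simp add: card_Diff_singleton)
  have cM: "card (M S) = (2 * N + 1) * ?K" using card_M[OF fin cS] by simp
  have key: "(\<Sum>m\<in>{m \<in> M S. m s = t}. real (cyc S (\<rho> \<circ> m)))
      \<le> real ?K * (3 * H N + real (Fx (S - {s, t}) (rt \<rho> s t)) / 2) + real ?K * real (cc \<rho> s t)"
    if t: "t \<in> ?T" for t
  proof -
    let ?St = "S - {s, t}"
    let ?A = "{m \<in> M S. m s = t}"
    have tS: "t \<in> S" and st: "s \<noteq> t" using t by auto
    have bA: "bij_betw (\<lambda>m. m(s := s, t := t)) ?A (M ?St)" by (rule M_split_bij[OF sS tS st])
    have finSt: "finite ?St" using fin by simp
    have cSt: "card ?St = 2 * N"
    proof -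
      have "card {s, t} = 2" using st by auto
      moreover have "{s, t} \<subseteq> S" using sS tS by auto
      ultimately show ?thesis using cS fin by (simp add: card_Diff_subset)
    qed
    have cA: "card ?A = ?K"
      using bij_betw_same_card[OF bA] card_M[OF finSt cSt] by simp
    have bSt: "bij_betw (rt \<rho> s t) ?St ?St" by (rule rt_bij[OF fin bij sS tS st])
    have e1: "real (cyc S (\<rho> \<circ> m)) = real (cyc ?St (rt \<rho> s t \<circ> m(s := s, t := t))) + real (cc \<rho> s t)"
      if m: "m \<in> ?A" for m
    proof -
      have "cyc S (\<rho> \<circ> m) = cyc ?St (rt \<rho> s t \<circ> m) + cc \<rho> s t"
        using m by (intro step_cyc[OF fin bij _ sS]) auto
      moreover have "cyc ?St (rt \<rho> s t \<circ> m) = cyc ?St (rt \<rho> s t \<circ> m(s := s, t := t))"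
        by (rule cyc_cong) auto
      ultimately show ?thesis by simp
    qed
    have "(\<Sum>m\<in>?A. real (cyc S (\<rho> \<circ> m)))
        = (\<Sum>m\<in>?A. real (cyc ?St (rt \<rho> s t \<circ> m(s := s, t := t)))) + (\<Sum>m\<in>?A. real (cc \<rho> s t))"
      by (simp add: e1 sum.distrib)
    also have "(\<Sum>m\<in>?A. real (cyc ?St (rt \<rho> s t \<circ> m(s := s, t := t))))
        = (\<Sum>m'\<in>M ?St. real (cyc ?St (rt \<rho> s t \<circ> m')))"
      by (rule sum.reindex_bij_betw[OF bA])
    also have "(\<Sum>m\<in>?A. real (cc \<rho> s t)) = real ?K * real (cc \<rho> s t)"
      using cA by simp
    also have "(\<Sum>m'\<in>M ?St. real (cyc ?St (rt \<rho> s t \<circ> m')))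
        \<le> real (card (M ?St)) * (3 * H N + real (Fx ?St (rt \<rho> s t)) / 2)"
      by (rule Suc.IH[OF finSt cSt bSt])
    also have "card (M ?St) = ?K" by (rule card_M[OF finSt cSt])
    finally show ?thesis by (simp add: o_def)
  qed
  have "(\<Sum>m\<in>M S. real (cyc S (\<rho> \<circ> m))) = (\<Sum>t\<in>?T. \<Sum>m\<in>{m \<in> M S. m s = t}. real (cyc S (\<rho> \<circ> m)))"
    by (rule M_sum_split[OF fin sS])
  also have "\<dots> \<le> (\<Sum>t\<in>?T. real ?K * (3 * H N + real (Fx (S - {s, t}) (rt \<rho> s t)) / 2) + real ?K * real (cc \<rho> s t))"
    by (rule sum_mono) (rule key)
  also have "\<dots> = real ?K * (real (card ?T) * (3 * H N) + (\<Sum>t\<in>?T. real (Fx (S - {s, t}) (rt \<rho> s t)) / 2 + real (cc \<rho> s t)))"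
    by (simp add: sum.distrib sum_distrib_left algebra_simps)
  also have "\<dots> \<le> real ?K * (real (card ?T) * (3 * H N) + (3 + real (card ?T) * (real (Fx S \<rho>) / 2)))"
    by (intro mult_left_mono add_left_mono comb_bound[OF fin bij sS ch]) simp
  also have "\<dots> = real (card (M S)) * (3 * H (Suc N) + real (Fx S \<rho>) / 2)"
    unfolding cM cT H_Suc by (simp add: field_simps)
  finally show ?case .
qed



definition rot :: "nat \<Rightarrow> nat \<times> nat \<Rightarrow> nat \<times> nat" where
  "rot n p = (if p \<in> tri_sides n then (fst p, (snd p + 1) mod 3) else p)"

lemma fin_sides: "finite (tri_sides n)"
  by (simp add: tri_sides_def)

lemma card_sides: "card (tri_sides n) = 3 * n"
  by (simp add: tri_sides_def)

lemma mod3: "j < (3::nat) \<Longrightarrow> (j + 1) mod 3 = (if j = 2 then 0 else j + 1)"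
proof -
  assume "j < 3"
  hence "j = 0 \<or> j = 1 \<or> j = 2" by arith
  thus ?thesis by auto
qed

lemma rot_bij: "bij_betw (rot n) (tri_sides n) (tri_sides n)"
proof -
  have sub: "rot n ` tri_sides n \<subseteq> tri_sides n" by (auto simp: rot_def tri_sides_def)
  have "inj_on (rot n) (tri_sides n)"
  proof (rule inj_onI)
    fix x y assume xy: "x \<in> tri_sides n" "y \<in> tri_sides n" "rot n x = rot n y"
    obtain i j where x: "x = (i, j)" "j < 3" using xy(1) by (auto simp: tri_sides_def)
    obtain k l where y: "y = (k, l)" "l < 3" using xy(2) by (auto simp: tri_sides_def)
    have "i = k" "(j + 1) mod 3 = (l + 1) mod 3" using xy x y by (auto simp: rot_def)
    moreover have "j = l" using \<open>(j + 1) mod 3 = (l + 1) mod 3\<close> mod3[OF x(2)] mod3[OF y(2)] x(2) y(2)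
      by (simp split: if_splits)
    ultimately show "x = y" using x y by simp
  qed
  thus ?thesis using endo_inj_surj[OF fin_sides sub] by (simp add: bij_betw_def)
qed

lemma rot_Fx: "Fx (tri_sides n) (rot n) = 0"
proof -
  have "{x \<in> tri_sides n. rot n x = x} = {}"
  proof (rule ccontr)
    assume "{x \<in> tri_sides n. rot n x = x} \<noteq> {}"
    then obtain i j where "(i, j) \<in> tri_sides n" "rot n (i, j) = (i, j)" by auto
    hence "j < 3" "(j + 1) mod 3 = j" by (auto simp: rot_def tri_sides_def)
    thus False using mod3[of j] by (simp split: if_splits)
  qed
  thus ?thesis unfolding Fx_def by (metis card.empty)
qed

lemma sm_eq: "side_matchings n = M (tri_sides n)"
  unfolding side_matchings_def M_def by simp

lemma glue_eq:
  assumes m: "m \<in> M (tri_sides n)"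
  shows "glue_rel n m = Ed (tri_sides n) (rot n \<circ> m) \<union> (Ed (tri_sides n) (rot n \<circ> m))\<inverse>"
proof -
  let ?S = "tri_sides n"
  have A: "{((i, j), (fst (m (i, j)), (snd (m (i, j)) + 1) mod 3)) | i j. (i, j) \<in> ?S}
           = Ed ?S (rot n \<circ> m)"
  proof -
    have "rot n (m x) = (fst (m x), (snd (m x) + 1) mod 3)" if "x \<in> ?S" for x
      using M_D[OF m that] by (simp add: rot_def)
    thus ?thesis unfolding Ed_def by force
  qed
  have B: "{((i, (j + 1) mod 3), m (i, j)) | i j. (i, j) \<in> ?S} = (Ed ?S (rot n \<circ> m))\<inverse>"
  proof
    show "{((i, (j + 1) mod 3), m (i, j)) | i j. (i, j) \<in> ?S} \<subseteq> (Ed ?S (rot n \<circ> m))\<inverse>"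
    proof
      fix p assume "p \<in> {((i, (j + 1) mod 3), m (i, j)) | i j. (i, j) \<in> ?S}"
      then obtain i j where p: "p = ((i, (j + 1) mod 3), m (i, j))" "(i, j) \<in> ?S" by blast
      have "m (i, j) \<in> ?S" "m (m (i, j)) = (i, j)" using M_D[OF m p(2)] by auto
      moreover have "rot n (i, j) = (i, (j + 1) mod 3)" using p(2) by (simp add: rot_def)
      ultimately show "p \<in> (Ed ?S (rot n \<circ> m))\<inverse>" unfolding Ed_def using p(1) by force
    qed
    show "(Ed ?S (rot n \<circ> m))\<inverse> \<subseteq> {((i, (j + 1) mod 3), m (i, j)) | i j. (i, j) \<in> ?S}"
    proof
      fix p assume "p \<in> (Ed ?S (rot n \<circ> m))\<inverse>"
      then obtain x where x: "x \<in> ?S" "p = (rot n (m x), x)" unfolding Ed_def by auto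
      obtain i j where ij: "m x = (i, j)" by (cases "m x")
      have "(i, j) \<in> ?S" "m (i, j) = x" using M_D[OF m x(1)] ij by auto
      moreover have "rot n (i, j) = (i, (j + 1) mod 3)" using \<open>(i, j) \<in> ?S\<close> by (simp add: rot_def)
      ultimately show "p \<in> {((i, (j + 1) mod 3), m (i, j)) | i j. (i, j) \<in> ?S}"
        using x(2) ij by force
    qed
  qed
  show ?thesis unfolding glue_rel_def A B ..
qed

lemma nv_eq:
  assumes m: "m \<in> M (tri_sides n)"
  shows "num_vertices n m = cyc (tri_sides n) (rot n \<circ> m)"
proof -
  let ?E = "Ed (tri_sides n) (rot n \<circ> m)"
  have "glue_rel n m \<union> (glue_rel n m)\<inverse> = ?E \<union> ?E\<inverse>"
    unfolding glue_eq[OF m] by auto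
  thus ?thesis unfolding num_vertices_def surface_vertices_def cyc_def Rl_def tri_corners_def tri_sides_def
    by simp
qed

lemma ln_lower: "0 < x \<Longrightarrow> 1 - 1 / x \<le> ln (x::real)"
proof -
  assume x: "0 < x"
  have "ln (1 / x) \<le> 1 / x - 1" using x by (intro ln_le_minus_one) simp
  thus ?thesis using x by (simp add: ln_div)
qed

lemma H_bound: "N \<ge> 1 \<Longrightarrow> H N \<le> 1 + ln (2 * real N - 1) / 2"
proof (induction N rule: dec_induct)
  case base
  show ?case by (simp add: H_def)
next
  case (step N)
  have N1: "real N \<ge> 1" using step.hyps by simp
  have "2 / (2 * real N + 1) = 1 - 1 / ((2 * real N + 1) / (2 * real N - 1))"
    using N1 by (simp add: field_simps)
  also have "\<dots> \<le> ln ((2 * real N + 1) / (2 * real N - 1))"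
    using N1 by (intro ln_lower) simp
  also have "\<dots> = ln (2 * real N + 1) - ln (2 * real N - 1)"
    using N1 by (intro ln_divide_pos) auto
  finally have L: "2 / (2 * real N + 1) \<le> ln (2 * real N + 1) - ln (2 * real N - 1)" .
  have e: "2 / (2 * real N + 1) = 2 * (1 / (2 * real N + 1))" by simp
  have L2: "2 * (1 / (2 * real N + 1)) \<le> ln (2 * real N + 1) - ln (2 * real N - 1)"
    using L unfolding e .
  have ar: "hN + y \<le> 1 + a / 2 + (b - a) / 2"
    if "2 * y \<le> b - a" "hN \<le> 1 + a / 2" for hN y a b :: real
    using that by (simp add: field_simps)
  have "H (Suc N) = H N + 1 / (2 * real N + 1)" by (rule H_Suc)
  also have "\<dots> \<le> 1 + ln (2 * real N - 1) / 2 + (ln (2 * real N + 1) - ln (2 * real N - 1)) / 2"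
    by (rule ar[OF L2 step.IH])
  also have "\<dots> = 1 + ln (2 * real (Suc N) - 1) / 2" by (simp add: field_simps)
  finally show ?case .
qed

theorem theorem2p1:
  fixes n :: nat
  assumes "even n"
  shows "expected_vertices n \<le> 3 / 2 * ln (real n) + 6"
proof -
  obtain k where k: "n = 2 * k" using assms by blast
  let ?S = "tri_sides n"
  let ?N = "3 * k"
  have cS: "card ?S = 2 * ?N" using k by (simp add: card_sides)
  have sumeq: "(\<Sum>m\<in>M ?S. real (num_vertices n m)) = (\<Sum>m\<in>M ?S. real (cyc ?S (rot n \<circ> m)))"
    by (rule sum.cong[OF refl]) (simp add: nv_eq)
  have mb: "(\<Sum>m\<in>M ?S. real (cyc ?S (rot n \<circ> m))) \<le> real (card (M ?S)) * (3 * H ?N)"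
    using main_bound[OF fin_sides cS rot_bij] by (simp add: rot_Fx)
  have cpos: "card (M ?S) > 0"
  proof -
    have "df N > 0" for N by (induction N) auto
    thus ?thesis using card_M[OF fin_sides cS] by simp
  qed
  have ev: "expected_vertices n \<le> 3 * H ?N"
  proof -
    have "expected_vertices n = (\<Sum>m\<in>M ?S. real (cyc ?S (rot n \<circ> m))) / real (card (M ?S))"
      unfolding expected_vertices_def sm_eq sumeq ..
    also have "\<dots> \<le> 3 * H ?N" using mb cpos by (simp add: divide_le_eq mult.commute)
    finally show ?thesis .
  qed
  show ?thesis
  proof (cases "k = 0")
    case True
    hence "H ?N = 0" by (simp add: H_def)
    thus ?thesis using ev k True by simp
  next
    case False
    hence n1: "real n \<ge> 2" using k by simp
    have "H ?N \<le> 1 + ln (2 * real ?N - 1) / 2" using False by (intro H_bound) simp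
    also have "ln (2 * real ?N - 1) \<le> ln (3 * real n)"
      using n1 k by (subst ln_le_cancel_iff) auto
    also have "ln (3 * real n) = ln 3 + ln (real n)" using n1 by (simp add: ln_mult)
    also have "ln (3::real) \<le> 2" using ln_le_minus_one[of 3] by simp
    hence "1 + (ln 3 + ln (real n)) / 2 \<le> 2 + ln (real n) / 2" by simp
    finally have "H ?N \<le> 2 + ln (real n) / 2" by simp
    thus ?thesis using ev by simp
  qed
qed

end
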